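(* Let $A$ be a Banach algebra with $A^*A=A^*$. If $aa''\in Z_1(A^{**})$ for all $a\in A$ and $a''\in A^{**}$, then $A$ is Arens regular.
   Context: $A^{**}$ carries the first Arens product: for $a''=w^*\text{-}\lim_\alpha a_\alpha$, $b''=w^*\text{-}\lim_\beta b_\beta$ ($a_\alpha,b_\beta\in A$) and $a'\in A^*$, $\langle a''b'',a'\rangle=\lim_\alpha\lim_\beta\langle a',a_\alpha b_\beta\rangle$; the second Arens product is $\langle a''\circ b'',a'\rangle=\lim_\beta\lim_\alpha\langle a',a_\alpha b_\beta\rangle$. $A$ is Arens regular if the two products coincide. $Z_1(A^{**})$ is the set of $a''\in A^{**}$ such that $b''\mapsto a''b''$ is weak$^*$-to-weak$^*$ continuous. For $a'\in A^*$, $a\in A$, $\langle a'a,b\rangle=\langle a',ab\rangle$, and $A^*A=\{a'a:a'\in A^*,a\in A\}$. *)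

theory Defs
  imports "HOL-Analysis.Analysis"
begin

type_synonym 'a dual = "'a \<Rightarrow>\<^sub>L real"
type_synonym 'a bidual = "('a \<Rightarrow>\<^sub>L real) \<Rightarrow>\<^sub>L real"

definition dual_act :: "'a::real_normed_algebra dual \<Rightarrow> 'a \<Rightarrow> 'a dual" where
  "dual_act f a = Blinfun (\<lambda>b. blinfun_apply f (a * b))"

definition dual_lact :: "'a \<Rightarrow> 'a::real_normed_algebra dual \<Rightarrow> 'a dual" where
  "dual_lact a f = Blinfun (\<lambda>b. blinfun_apply f (b * a))"

definition bidual_act :: "'a::real_normed_algebra bidual \<Rightarrow> 'a dual \<Rightarrow> 'a dual" where
  "bidual_act G f = Blinfun (\<lambda>a. blinfun_apply G (dual_act f a))"

definition bidual_ract :: "'a::real_normed_algebra dual \<Rightarrow> 'a bidual \<Rightarrow> 'a dual" where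
  "bidual_ract f F = Blinfun (\<lambda>b. blinfun_apply F (dual_lact b f))"

text \<open>First Arens product: <a'' b'', a'> = <a'', b'' . a'>
  (= lim_alpha lim_beta <a', a_alpha b_beta>).\<close>
definition arens1 :: "'a::real_normed_algebra bidual \<Rightarrow> 'a bidual \<Rightarrow> 'a bidual" where
  "arens1 F G = Blinfun (\<lambda>f. blinfun_apply F (bidual_act G f))"

text \<open>Second Arens product: <a'' o b'', a'> = <b'', a' . a''>
  (= lim_beta lim_alpha <a', a_alpha b_beta>).\<close>
definition arens2 :: "'a::real_normed_algebra bidual \<Rightarrow> 'a bidual \<Rightarrow> 'a bidual" where
  "arens2 F G = Blinfun (\<lambda>f. blinfun_apply G (bidual_ract f F))"

definition canon :: "'a::real_normed_vector \<Rightarrow> 'a bidual" where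
  "canon a = Blinfun (\<lambda>f. blinfun_apply f a)"

definition wstar :: "'a::real_normed_vector bidual topology" where
  "wstar = topology (\<lambda>S. \<exists>U::('a dual \<Rightarrow> real) set. open U \<and> S = (\<lambda>F. blinfun_apply F) -` U)"

definition Z1 :: "'a::real_normed_algebra bidual set" where
  "Z1 = {F. continuous_map wstar wstar (\<lambda>G. arens1 F G)}"

definition arens_regular :: "'a::real_normed_algebra itself \<Rightarrow> bool" where
  "arens_regular _ \<longleftrightarrow> (\<forall>F G :: 'a bidual. arens1 F G = arens2 F G)"

end

theory Submission
  imports Defs
begin

lemma dual_act_apply[simp]:
  fixes f :: "'a::real_normed_algebra dual"
  shows "blinfun_apply (dual_act f a) b = blinfun_apply f (a * b)"
proof -
  have "bounded_linear (\<lambda>b. blinfun_apply f (a * b))"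
    by (rule bounded_linear_compose[OF blinfun.bounded_linear_right bounded_linear_mult_right])
  then show ?thesis unfolding dual_act_def by (simp add: bounded_linear_Blinfun_apply)
qed

lemma dual_lact_apply[simp]:
  fixes f :: "'a::real_normed_algebra dual"
  shows "blinfun_apply (dual_lact a f) b = blinfun_apply f (b * a)"
proof -
  have "bounded_linear (\<lambda>b. blinfun_apply f (b * a))"
    by (rule bounded_linear_compose[OF blinfun.bounded_linear_right bounded_linear_mult_left])
  then show ?thesis unfolding dual_lact_def by (simp add: bounded_linear_Blinfun_apply)
qed

lemma norm_dual_act: "norm (dual_act (f::'a::real_normed_algebra dual) a) \<le> norm f * norm a"
proof (rule norm_blinfun_bound)
  fix x
  have "norm (blinfun_apply f (a * x)) \<le> norm f * norm (a * x)" by (rule norm_blinfun)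
  also have "\<dots> \<le> norm f * (norm a * norm x)"
    by (intro mult_left_mono norm_mult_ineq) simp
  finally show "norm (blinfun_apply (dual_act f a) x) \<le> norm f * norm a * norm x"
    by (simp add: mult.assoc)
qed simp

lemma norm_dual_lact: "norm (dual_lact a (f::'a::real_normed_algebra dual)) \<le> norm f * norm a"
proof (rule norm_blinfun_bound)
  fix x
  have "norm (blinfun_apply f (x * a)) \<le> norm f * norm (x * a)" by (rule norm_blinfun)
  also have "\<dots> \<le> norm f * (norm x * norm a)"
    by (intro mult_left_mono norm_mult_ineq) simp
  finally show "norm (blinfun_apply (dual_lact a f) x) \<le> norm f * norm a * norm x"
    by (simp add: algebra_simps)
qed simp

lemma bl_dual_act_a: "bounded_linear (\<lambda>a. dual_act (f::'a::real_normed_algebra dual) a)"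
proof (rule bounded_linear_intro[where K="norm f"])
  show "dual_act f (x + y) = dual_act f x + dual_act f y" for x y
    by (rule blinfun_eqI) (simp add: distrib_right blinfun.add_right plus_blinfun.rep_eq)
  show "dual_act f (r *\<^sub>R x) = r *\<^sub>R dual_act f x" for r x
    by (rule blinfun_eqI) (simp add: blinfun.scaleR_right scaleR_blinfun.rep_eq)
  show "norm (dual_act f x) \<le> norm x * norm f" for x
    using norm_dual_act[of f x] by (simp add: mult.commute)
qed

lemma bl_dual_lact_b: "bounded_linear (\<lambda>b. dual_lact b (f::'a::real_normed_algebra dual))"
proof (rule bounded_linear_intro[where K="norm f"])
  show "dual_lact (x + y) f = dual_lact x f + dual_lact y f" for x y
    by (rule blinfun_eqI) (simp add: distrib_left blinfun.add_right plus_blinfun.rep_eq)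
  show "dual_lact (r *\<^sub>R x) f = r *\<^sub>R dual_lact x f" for r x
    by (rule blinfun_eqI) (simp add: blinfun.scaleR_right scaleR_blinfun.rep_eq)
  show "norm (dual_lact x f) \<le> norm x * norm f" for x
    using norm_dual_lact[of x f] by (simp add: mult.commute)
qed

lemma bidual_act_apply[simp]:
  "blinfun_apply (bidual_act G f) a = blinfun_apply G (dual_act (f::'a::real_normed_algebra dual) a)"
proof -
  have "bounded_linear (\<lambda>a. blinfun_apply G (dual_act f a))"
    by (rule bounded_linear_compose[OF blinfun.bounded_linear_right bl_dual_act_a])
  then show ?thesis unfolding bidual_act_def by (simp add: bounded_linear_Blinfun_apply)
qed

lemma bidual_ract_apply[simp]:
  "blinfun_apply (bidual_ract f F) b = blinfun_apply F (dual_lact b (f::'a::real_normed_algebra dual))"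
proof -
  have "bounded_linear (\<lambda>b. blinfun_apply F (dual_lact b f))"
    by (rule bounded_linear_compose[OF blinfun.bounded_linear_right bl_dual_lact_b])
  then show ?thesis unfolding bidual_ract_def by (simp add: bounded_linear_Blinfun_apply)
qed

lemma bl_bidual_act: "bounded_linear (\<lambda>f. bidual_act G (f::'a::real_normed_algebra dual))"
proof (rule bounded_linear_intro[where K="norm G"])
  show "bidual_act G (x + y) = bidual_act G x + bidual_act G y" for x y
  proof (rule blinfun_eqI)
    fix a
    have "dual_act (x + y) a = dual_act x a + dual_act y a"
      by (rule blinfun_eqI) (simp add: blinfun.add_left)
    then show "blinfun_apply (bidual_act G (x + y)) a = blinfun_apply (bidual_act G x + bidual_act G y) a"
      by (simp add: blinfun.add_right plus_blinfun.rep_eq)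
  qed
  show "bidual_act G (r *\<^sub>R x) = r *\<^sub>R bidual_act G x" for r x
  proof (rule blinfun_eqI)
    fix a
    have "dual_act (r *\<^sub>R x) a = r *\<^sub>R dual_act x a"
      by (rule blinfun_eqI) (simp add: blinfun.scaleR_left)
    then show "blinfun_apply (bidual_act G (r *\<^sub>R x)) a = blinfun_apply (r *\<^sub>R bidual_act G x) a"
      by (simp add: blinfun.scaleR_right scaleR_blinfun.rep_eq)
  qed
  show "norm (bidual_act G x) \<le> norm x * norm G" for x
  proof (rule norm_blinfun_bound)
    fix a
    have "norm (blinfun_apply G (dual_act x a)) \<le> norm G * norm (dual_act x a)" by (rule norm_blinfun)
    also have "\<dots> \<le> norm G * (norm x * norm a)"
      by (intro mult_left_mono norm_dual_act) simp
    finally show "norm (blinfun_apply (bidual_act G x) a) \<le> norm x * norm G * norm a"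
      by (simp add: algebra_simps)
  qed simp
qed

lemma bl_bidual_ract: "bounded_linear (\<lambda>f. bidual_ract (f::'a::real_normed_algebra dual) F)"
proof (rule bounded_linear_intro[where K="norm F"])
  show "bidual_ract (x + y) F = bidual_ract x F + bidual_ract y F" for x y
  proof (rule blinfun_eqI)
    fix a
    have "dual_lact a (x + y) = dual_lact a x + dual_lact a y"
      by (rule blinfun_eqI) (simp add: blinfun.add_left)
    then show "blinfun_apply (bidual_ract (x + y) F) a = blinfun_apply (bidual_ract x F + bidual_ract y F) a"
      by (simp add: blinfun.add_right plus_blinfun.rep_eq)
  qed
  show "bidual_ract (r *\<^sub>R x) F = r *\<^sub>R bidual_ract x F" for r x
  proof (rule blinfun_eqI)
    fix a
    have "dual_lact a (r *\<^sub>R x) = r *\<^sub>R dual_lact a x"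
      by (rule blinfun_eqI) (simp add: blinfun.scaleR_left)
    then show "blinfun_apply (bidual_ract (r *\<^sub>R x) F) a = blinfun_apply (r *\<^sub>R bidual_ract x F) a"
      by (simp add: blinfun.scaleR_right scaleR_blinfun.rep_eq)
  qed
  show "norm (bidual_ract x F) \<le> norm x * norm F" for x
  proof (rule norm_blinfun_bound)
    fix a
    have "norm (blinfun_apply F (dual_lact a x)) \<le> norm F * norm (dual_lact a x)" by (rule norm_blinfun)
    also have "\<dots> \<le> norm F * (norm x * norm a)"
      by (intro mult_left_mono norm_dual_lact) simp
    finally show "norm (blinfun_apply (bidual_ract x F) a) \<le> norm x * norm F * norm a"
      by (simp add: algebra_simps)
  qed simp
qed

lemma arens1_apply[simp]:
  "blinfun_apply (arens1 F G) f = blinfun_apply F (bidual_act G (f::'a::real_normed_algebra dual))"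
proof -
  have "bounded_linear (\<lambda>f. blinfun_apply F (bidual_act G f))"
    by (rule bounded_linear_compose[OF blinfun.bounded_linear_right bl_bidual_act])
  then show ?thesis unfolding arens1_def by (simp add: bounded_linear_Blinfun_apply)
qed

lemma arens2_apply[simp]:
  "blinfun_apply (arens2 F G) f = blinfun_apply G (bidual_ract (f::'a::real_normed_algebra dual) F)"
proof -
  have "bounded_linear (\<lambda>f. blinfun_apply G (bidual_ract f F))"
    by (rule bounded_linear_compose[OF blinfun.bounded_linear_right bl_bidual_ract])
  then show ?thesis unfolding arens2_def by (simp add: bounded_linear_Blinfun_apply)
qed

lemma canon_apply[simp]: "blinfun_apply (canon a) f = blinfun_apply f a"
  unfolding canon_def by (simp add: bounded_linear_Blinfun_apply blinfun.bounded_linear_left)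


lemma kernel_span:
  fixes B :: "'a::real_normed_vector dual set"
  assumes "finite B"
  shows "(\<forall>x. (\<forall>b\<in>B. blinfun_apply b x = 0) \<longrightarrow> blinfun_apply f x = 0) \<Longrightarrow> f \<in> span B"
  using assms
proof (induction B arbitrary: f rule: finite_induct)
  case empty
  then have "f = 0" by (intro blinfun_eqI) simp
  then show ?case by (simp add: span_zero)
next
  case (insert g B)
  show ?case
  proof (cases "\<forall>x. (\<forall>b\<in>B. blinfun_apply b x = 0) \<longrightarrow> blinfun_apply g x = 0")
    case True
    with insert.prems have "f \<in> span B" by (intro insert.IH) auto
    then show ?thesis by (meson span_mono subset_insertI subsetD)
  next
    case False
    then obtain x1 where x1: "\<forall>b\<in>B. blinfun_apply b x1 = 0" "blinfun_apply g x1 \<noteq> 0" by blast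
    define x0 where "x0 = (1 / blinfun_apply g x1) *\<^sub>R x1"
    have x0: "\<forall>b\<in>B. blinfun_apply b x0 = 0" "blinfun_apply g x0 = 1"
      using x1 by (auto simp: x0_def blinfun.scaleR_right)
    define f' where "f' = f - blinfun_apply f x0 *\<^sub>R g"
    have "f' \<in> span B"
    proof (rule insert.IH, intro allI impI)
      fix x assume xk: "\<forall>b\<in>B. blinfun_apply b x = 0"
      define y where "y = x - blinfun_apply g x *\<^sub>R x0"
      have "\<forall>b\<in>insert g B. blinfun_apply b y = 0"
        using xk x0 by (auto simp: y_def blinfun.diff_right blinfun.scaleR_right)
      then have "blinfun_apply f y = 0" using insert.prems by blast
      then show "blinfun_apply f' x = 0"
        by (simp add: f'_def y_def blinfun.diff_right blinfun.scaleR_right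
            minus_blinfun.rep_eq scaleR_blinfun.rep_eq mult.commute)
    qed
    then have "f' \<in> span (insert g B)" by (meson span_mono subset_insertI subsetD)
    moreover have "blinfun_apply f x0 *\<^sub>R g \<in> span (insert g B)"
      by (intro span_mul span_base) simp
    ultimately have "f' + blinfun_apply f x0 *\<^sub>R g \<in> span (insert g B)" by (rule span_add)
    then show ?thesis by (simp add: f'_def)
  qed
qed

lemma interpolate:
  fixes I :: "'a::real_normed_vector dual set" and G :: "'a bidual"
  assumes "finite I"
  shows "\<exists>a. \<forall>i\<in>I. blinfun_apply i a = blinfun_apply G i"
  using assms
proof (induction I rule: finite_induct)
  case empty then show ?case by simp
next
  case (insert f I)
  then obtain a0 where a0: "\<forall>i\<in>I. blinfun_apply i a0 = blinfun_apply G i" by blast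
  show ?case
  proof (cases "\<forall>x. (\<forall>b\<in>I. blinfun_apply b x = 0) \<longrightarrow> blinfun_apply f x = 0")
    case True
    then have fs: "f \<in> span I" using kernel_span[OF insert.hyps(1)] by blast
    have "blinfun_apply f a0 = blinfun_apply G f"
      using fs
    proof (induction rule: span_induct_alt)
      case base then show ?case by (simp add: blinfun.zero_right)
    next
      case (step c x y)
      then show ?case using a0
        by (simp add: blinfun.add_right blinfun.scaleR_right plus_blinfun.rep_eq scaleR_blinfun.rep_eq)
    qed
    then show ?thesis using a0 by auto
  next
    case False
    then obtain x1 where x1: "\<forall>b\<in>I. blinfun_apply b x1 = 0" "blinfun_apply f x1 \<noteq> 0" by blast
    define a where "a = a0 + ((blinfun_apply G f - blinfun_apply f a0) / blinfun_apply f x1) *\<^sub>R x1"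
    have "\<forall>i\<in>insert f I. blinfun_apply i a = blinfun_apply G i"
      using a0 x1 by (auto simp: a_def blinfun.add_right blinfun.scaleR_right)
    then show ?thesis by blast
  qed
qed


lemma wstar_pullback: "wstar = pullback_topology UNIV blinfun_apply euclidean"
  unfolding wstar_def pullback_topology_def by simp

lemma openin_wstar: "openin wstar S \<longleftrightarrow> (\<exists>U. open U \<and> S = blinfun_apply -` U)"
  unfolding wstar_pullback openin_pullback_topology by simp

lemma topspace_wstar: "topspace wstar = UNIV"
  unfolding wstar_pullback topspace_pullback_topology by simp

lemma z1_eq:
  fixes K G :: "'a::real_normed_algebra bidual"
  assumes "K \<in> Z1"
  shows "arens1 K G = arens2 K G"
proof (rule blinfun_eqI)
  fix f :: "'a dual"
  define h where "h = (\<lambda>G. arens1 K G)"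
  have cont: "continuous_map wstar wstar h" using assms unfolding Z1_def h_def by simp
  define c where "c = blinfun_apply (arens1 K G) f"
  have small: "\<bar>blinfun_apply (arens2 K G) f - c\<bar> < e" if e: "e > 0" for e
  proof -
    define U :: "('a dual \<Rightarrow> real) set" where "U = {\<phi>. \<forall>i\<in>{f}. \<phi> (id i) \<in> ball c e}"
    have "open U" unfolding U_def by (rule product_topology_basis') auto
    then have "openin wstar (blinfun_apply -` U)" unfolding openin_wstar by blast
    then have "openin wstar {x \<in> topspace wstar. h x \<in> blinfun_apply -` U}"
      using cont unfolding continuous_map_def by blast
    then obtain V where V: "open V" "h -` (blinfun_apply -` U) = blinfun_apply -` V"
      unfolding openin_wstar topspace_wstar by (auto simp: vimage_def)
    have "G \<in> h -` (blinfun_apply -` U)" using e by (simp add: U_def h_def c_def)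
    then have GV: "blinfun_apply G \<in> V" using V(2) by auto
    have "openin (product_topology (\<lambda>i. euclidean) UNIV) V" using V(1) by (simp add: open_fun_def)
    from product_topology_open_contains_basis[OF this GV] obtain X where
      X: "blinfun_apply G \<in> (\<Pi>\<^sub>E i\<in>UNIV. X i)" "finite {i. X i \<noteq> UNIV}" "(\<Pi>\<^sub>E i\<in>UNIV. X i) \<subseteq> V"
      by auto
    obtain a where a: "\<forall>i\<in>insert (bidual_ract f K) {i. X i \<noteq> UNIV}. blinfun_apply i a = blinfun_apply G i"
      using interpolate[of "insert (bidual_ract f K) {i. X i \<noteq> UNIV}" G] X(2) by auto
    have "blinfun_apply (canon a) \<in> (\<Pi>\<^sub>E i\<in>UNIV. X i)"
    proof -
      have "blinfun_apply (canon a) i \<in> X i" for i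
      proof (cases "X i = UNIV")
        case False
        then have "blinfun_apply (canon a) i = blinfun_apply G i" using a by simp
        then show ?thesis using X(1) by auto
      qed simp
      then show ?thesis by auto
    qed
    then have "canon a \<in> h -` (blinfun_apply -` U)" using X(3) V(2) by auto
    then have "\<bar>blinfun_apply (arens1 K (canon a)) f - c\<bar> < e"
      by (simp add: U_def h_def dist_real_def abs_minus_commute)
    moreover have "bidual_act (canon a) f = dual_lact a f"
      by (rule blinfun_eqI) simp
    moreover have "blinfun_apply (bidual_ract f K) a = blinfun_apply G (bidual_ract f K)"
      using a by simp
    ultimately show ?thesis by simp
  qed
  have "blinfun_apply (arens2 K G) f = c"
  proof (rule ccontr)
    assume "blinfun_apply (arens2 K G) f \<noteq> c"
    then have "\<bar>blinfun_apply (arens2 K G) f - c\<bar> > 0" by simp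
    from small[OF this] show False by simp
  qed
  then show "blinfun_apply (arens1 K G) f = blinfun_apply (arens2 K G) f" by (simp add: c_def)
qed

theorem mainTheorem14:
  assumes factor: "{dual_act f a | f a. True} = (UNIV :: ('a::{real_normed_algebra, banach}) dual set)"
    and center: "\<forall>(a::'a) (F::'a bidual). arens1 (canon a) F \<in> Z1"
  shows "arens_regular TYPE('a)"
  unfolding arens_regular_def
proof (intro allI, rule blinfun_eqI)
  fix F G :: "'a bidual" and f' :: "'a dual"
  obtain f a where fa: "f' = dual_act f a" using factor by blast
  define K where "K = arens1 (canon a) F"
  have Kz: "arens1 K G = arens2 K G" using center z1_eq unfolding K_def by blast
  have e1: "bidual_act G (dual_act f a) = dual_act (bidual_act G f) a"
  proof (rule blinfun_eqI)
    fix x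
    have "dual_act (dual_act f a) x = dual_act f (a * x)"
      by (rule blinfun_eqI) (simp add: mult.assoc)
    then show "blinfun_apply (bidual_act G (dual_act f a)) x = blinfun_apply (dual_act (bidual_act G f) a) x"
      by simp
  qed
  have e2: "bidual_ract f K = bidual_ract (dual_act f a) F"
  proof (rule blinfun_eqI)
    fix b
    have "dual_act (dual_lact b f) a = dual_lact b (dual_act f a)"
      by (rule blinfun_eqI) (simp add: mult.assoc)
    then show "blinfun_apply (bidual_ract f K) b = blinfun_apply (bidual_ract (dual_act f a) F) b"
      by (simp add: K_def)
  qed
  have "blinfun_apply (arens1 F G) f' = blinfun_apply (arens1 K G) f"
    by (simp add: fa e1 K_def)
  also have "\<dots> = blinfun_apply (arens2 K G) f" by (simp add: Kz)
  also have "\<dots> = blinfun_apply (arens2 F G) f'"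
    by (simp add: fa e2 del: bidual_ract_apply)
  finally show "blinfun_apply (arens1 F G) f' = blinfun_apply (arens2 F G) f'" .
qed

end
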